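(* Let $(X,d)$ be a metric space with $|X|\geqslant 3$ and let $T\colon X\to X$ be a generalized Ćirić–Reich–Rus type mapping with constants $\alpha,\lambda\geqslant 0$, $2\alpha+\frac{3\lambda}{2}<1$, i.e. $$d(Tx,Ty)+d(Ty,Tz)+d(Tx,Tz)\leqslant \alpha\big(d(x,y)+d(y,z)+d(z,x)\big)+\lambda\big(d(x,Tx)+d(y,Ty)+d(z,Tz)\big)$$ for all pairwise distinct $x,y,z\in X$. If $x$ is an accumulation point of $X$ and $T$ is continuous at $x$, then $$d(Tx,Ty)\leqslant \alpha\, d(x,y)+\lambda\left(d(x,Tx)+\frac{d(y,Ty)}{2}\right)$$ holds for all $y\in X$. *)

theory Defs
  imports "HOL-Analysis.Analysis"
begin

definition gen_CRR :: "('a::metric_space \<Rightarrow> 'a) \<Rightarrow> real \<Rightarrow> real \<Rightarrow> bool" where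
  "gen_CRR T alpha lam \<longleftrightarrow> alpha \<ge> 0 \<and> lam \<ge> 0 \<and> 2 * alpha + 3 * lam / 2 < 1 \<and>
     (\<forall>x y z. x \<noteq> y \<and> y \<noteq> z \<and> x \<noteq> z \<longrightarrow>
        dist (T x) (T y) + dist (T y) (T z) + dist (T x) (T z)
          \<le> alpha * (dist x y + dist y z + dist z x) + lam * (dist x (T x) + dist y (T y) + dist z (T z)))"

end

theory Submission
  imports Defs
begin

theorem proposition2p5:
  fixes T :: "'a::metric_space \<Rightarrow> 'a" and alpha lam :: real and x :: 'a
  assumes "infinite (UNIV :: 'a set) \<or> card (UNIV :: 'a set) \<ge> 3"
    and "gen_CRR T alpha lam"
    and "x islimpt (UNIV :: 'a set)"
    and "isCont T x"
  shows "\<forall>y. dist (T x) (T y) \<le> alpha * dist x y + lam * (dist x (T x) + dist y (T y) / 2)"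
proof
  fix y
  have a0: "alpha \<ge> 0" and l0: "lam \<ge> 0" and H: "\<And>x y z. x \<noteq> y \<Longrightarrow> y \<noteq> z \<Longrightarrow> x \<noteq> z \<Longrightarrow>
        dist (T x) (T y) + dist (T y) (T z) + dist (T x) (T z)
          \<le> alpha * (dist x y + dist y z + dist z x) + lam * (dist x (T x) + dist y (T y) + dist z (T z))"
    using assms(2) unfolding gen_CRR_def by auto
  show "dist (T x) (T y) \<le> alpha * dist x y + lam * (dist x (T x) + dist y (T y) / 2)"
  proof (cases "y = x")
    case True
    then show ?thesis using a0 l0 by simp
  next
    case False
    have nb: "at x \<noteq> bot" using assms(3) trivial_limit_within by blast
    have zx: "((\<lambda>z. z) \<longlongrightarrow> x) (at x)" by (rule tendsto_ident_at)
    have Tz: "((\<lambda>z. T z) \<longlongrightarrow> T x) (at x)" using assms(4) isCont_def by blast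
    have ev1: "eventually (\<lambda>z. z \<noteq> y) (at x)"
      using tendsto_imp_eventually_ne[OF zx] False by metis
    have ev2: "eventually (\<lambda>z. z \<noteq> x) (at x)" by (simp add: eventually_at_filter)
    have ev: "eventually (\<lambda>z. dist (T x) (T y) + dist (T y) (T z) + dist (T x) (T z)
          \<le> alpha * (dist x y + dist y z + dist z x) + lam * (dist x (T x) + dist y (T y) + dist z (T z))) (at x)"
      using eventually_conj[OF ev1 ev2] by eventually_elim (use False H in auto)
    have L: "((\<lambda>z. dist (T x) (T y) + dist (T y) (T z) + dist (T x) (T z)) \<longlongrightarrow>
        dist (T x) (T y) + dist (T y) (T x) + dist (T x) (T x)) (at x)"
      by (intro tendsto_intros Tz)
    have R: "((\<lambda>z. alpha * (dist x y + dist y z + dist z x) + lam * (dist x (T x) + dist y (T y) + dist z (T z))) \<longlongrightarrow>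
        alpha * (dist x y + dist y x + dist x x) + lam * (dist x (T x) + dist y (T y) + dist x (T x))) (at x)"
      by (intro tendsto_intros Tz zx)
    have "dist (T x) (T y) + dist (T y) (T x) + dist (T x) (T x) \<le>
        alpha * (dist x y + dist y x + dist x x) + lam * (dist x (T x) + dist y (T y) + dist x (T x))"
      using tendsto_le[OF nb R L ev] .
    then show ?thesis by (simp add: dist_commute algebra_simps)
  qed
qed

end
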